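(* Let $X$ be a real Banach space and $D\subset X$ dense. Then $X$ has the Daugavet property if and only if for every $\varepsilon>0$ and $x,z\in D$, either $\|z\|\ge\|x\|$ or $$z\in\overline{\mathrm{co}}_{\mathbb{Q}}\big\{y\in \|x\|\operatorname{int}(B_X)\cap D: \|x-y\|>2\|x\|-\varepsilon\big\}.$$
   Context: $X$ has the Daugavet property if for every $\varepsilon>0$, $x\in S_X$ and slice $S=\{y\in B_X:f(y)>1-\alpha\}$ ($f\in S_{X^*}$, $\alpha>0$) there is $y\in S$ with $\|x-y\|>2-\varepsilon$. $\overline{\mathrm{co}}_{\mathbb{Q}}(A)$ is the norm closure of the set of convex combinations of elements of $A$ with rational coefficients; $\operatorname{int}(B_X)$ is the open unit ball. *)

theory Defs
  imports "HOL-Analysis.Analysis"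
begin

definition daugavet :: "'a::real_normed_vector itself \<Rightarrow> bool" where
  "daugavet _ \<longleftrightarrow>
     (\<forall>\<epsilon>>0. \<forall>x::'a. norm x = 1 \<longrightarrow>
        (\<forall>(f::'a \<Rightarrow> real) \<alpha>. bounded_linear f \<and> onorm f = 1 \<and> \<alpha> > 0 \<longrightarrow>
           (\<exists>y. norm y \<le> 1 \<and> f y > 1 - \<alpha> \<and> norm (x - y) > 2 - \<epsilon>)))"

definition rat_convex_combs :: "'a::real_vector set \<Rightarrow> 'a set" where
  "rat_convex_combs A = {y. \<exists>(n::nat) (c::nat \<Rightarrow> real) (v::nat \<Rightarrow> 'a).
       (\<forall>i<n. c i \<in> \<rat> \<and> c i \<ge> 0 \<and> v i \<in> A) \<and> (\<Sum>i<n. c i) = 1 \<and>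
       y = (\<Sum>i<n. c i *\<^sub>R v i)}"

definition rat_closed_hull :: "'a::real_normed_vector set \<Rightarrow> 'a set" where
  "rat_closed_hull A = closure (rat_convex_combs A)"

end

theory Submission
  imports Defs
begin


definition sublin :: "('a::real_vector \<Rightarrow> real) \<Rightarrow> bool" where
  "sublin q \<longleftrightarrow> (\<forall>x y. q (x + y) \<le> q x + q y) \<and> (\<forall>t x. t \<ge> 0 \<longrightarrow> q (t *\<^sub>R x) = t * q x)"

lemma sublin_0: "sublin q \<Longrightarrow> q 0 = 0"
  unfolding sublin_def by (metis mult_zero_left order_refl scaleR_zero_left)

lemma sublin_neg: "sublin q \<Longrightarrow> - q (- x) \<le> q x"
proof -
  assume s: "sublin q"
  have "q (x + - x) \<le> q x + q (- x)" using s unfolding sublin_def by blast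
  then show ?thesis using sublin_0[OF s] by simp
qed

lemma cInf_scale:
  fixes S :: "real set"
  assumes "S \<noteq> {}" "bdd_below S" "t > 0"
  shows "Inf ((\<lambda>r. t * r) ` S) = t * Inf S"
proof (rule antisym)
  have "Inf ((\<lambda>r. t * r) ` S) / t \<le> Inf S"
  proof (rule cInf_greatest[OF assms(1)])
    fix r assume "r \<in> S"
    have "bdd_below ((\<lambda>r. t * r) ` S)"
    proof -
      obtain m where "\<forall>r\<in>S. m \<le> r" using assms(2) unfolding bdd_below_def by auto
      then have "\<forall>y\<in>(\<lambda>r. t * r) ` S. t * m \<le> y" using assms(3) by auto
      then show ?thesis unfolding bdd_below_def by blast
    qed
    then have "Inf ((\<lambda>r. t * r) ` S) \<le> t * r" using \<open>r \<in> S\<close> by (intro cInf_lower) auto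
    then show "Inf ((\<lambda>r. t * r) ` S) / t \<le> r" using assms(3) by (simp add: divide_le_eq mult.commute)
  qed
  then show "Inf ((\<lambda>r. t * r) ` S) \<le> t * Inf S" using assms(3) by (simp add: divide_le_eq mult.commute)
next
  show "t * Inf S \<le> Inf ((\<lambda>r. t * r) ` S)"
  proof (rule cInf_greatest)
    show "(\<lambda>r. t * r) ` S \<noteq> {}" using assms(1) by auto
    fix y assume "y \<in> (\<lambda>r. t * r) ` S"
    then obtain r where "r \<in> S" "y = t * r" by auto
    then show "t * Inf S \<le> y" using assms by (simp add: cInf_lower)
  qed
qed

definition shiftf :: "('a::real_vector \<Rightarrow> real) \<Rightarrow> 'a \<Rightarrow> real \<Rightarrow> 'a \<Rightarrow> real" where
  "shiftf q a c = (\<lambda>v. Inf {q (v + t *\<^sub>R a) - t * c | t. t \<ge> 0})"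

lemma shiftf_props:
  assumes s: "sublin q" and c: "c \<le> q a"
  shows "sublin (shiftf q a c)" "\<And>v. shiftf q a c v \<le> q v" "shiftf q a c (- a) \<le> - c"
proof -
  define S where "S v = {q (v + t *\<^sub>R a) - t * c | t. t \<ge> 0}" for v
  have sd: "shiftf q a c v = Inf (S v)" for v unfolding shiftf_def S_def by simp
  have ne: "S v \<noteq> {}" for v by (auto simp: S_def)
  have lb: "r \<ge> - q (- v)" if rS: "r \<in> S v" for r v
  proof -
    obtain t where t: "t \<ge> 0" "r = q (v + t *\<^sub>R a) - t * c" using rS by (auto simp: S_def)
    have "q ((v + t *\<^sub>R a) + - v) \<le> q (v + t *\<^sub>R a) + q (- v)" using s unfolding sublin_def by blast
    moreover have "q (t *\<^sub>R a) = t * q a" using s t(1) unfolding sublin_def by blast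
    moreover have "t * c \<le> t * q a" using t(1) c by (simp add: mult_left_mono)
    ultimately show ?thesis using t by simp
  qed
  have bb: "bdd_below (S v)" for v unfolding bdd_below_def using lb by blast
  have mem: "q (v + t *\<^sub>R a) - t * c \<in> S v" if "t \<ge> 0" for v t unfolding S_def using that by blast
  have low: "Inf (S v) \<le> q (v + t *\<^sub>R a) - t * c" if "t \<ge> 0" for v t
    using cInf_lower[OF mem[OF that] bb] .
  show le: "shiftf q a c v \<le> q v" for v using low[of 0 v] by (simp add: sd)
  show "shiftf q a c (- a) \<le> - c" using low[of 1 "-a"] sublin_0[OF s] by (simp add: sd)
  show "sublin (shiftf q a c)"
    unfolding sublin_def
  proof (intro conjI allI impI)
    fix x y
    have "Inf (S (x + y)) - Inf (S y) \<le> Inf (S x)"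
    proof (rule cInf_greatest[OF ne])
      fix r1 assume "r1 \<in> S x"
      then obtain t1 where t1: "t1 \<ge> 0" "r1 = q (x + t1 *\<^sub>R a) - t1 * c" by (auto simp: S_def)
      have "Inf (S (x + y)) - r1 \<le> Inf (S y)"
      proof (rule cInf_greatest[OF ne])
        fix r2 assume "r2 \<in> S y"
        then obtain t2 where t2: "t2 \<ge> 0" "r2 = q (y + t2 *\<^sub>R a) - t2 * c" by (auto simp: S_def)
        have "Inf (S (x + y)) \<le> q (x + y + (t1 + t2) *\<^sub>R a) - (t1 + t2) * c"
          using low[of "t1 + t2" "x + y"] t1 t2 by simp
        also have "x + y + (t1 + t2) *\<^sub>R a = (x + t1 *\<^sub>R a) + (y + t2 *\<^sub>R a)"
          by (simp add: algebra_simps)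
        also have "q ((x + t1 *\<^sub>R a) + (y + t2 *\<^sub>R a)) \<le> q (x + t1 *\<^sub>R a) + q (y + t2 *\<^sub>R a)"
          using s unfolding sublin_def by blast
        finally show "Inf (S (x + y)) - r1 \<le> r2" using t1 t2 by (simp add: algebra_simps)
      qed
      then show "Inf (S (x + y)) - Inf (S y) \<le> r1" by simp
    qed
    then show "shiftf q a c (x + y) \<le> shiftf q a c x + shiftf q a c y" by (simp add: sd)
  next
    fix t :: real and x assume t: "t \<ge> 0"
    show "shiftf q a c (t *\<^sub>R x) = t * shiftf q a c x"
    proof (cases "t = 0")
      case True
      have "Inf (S 0) = 0"
      proof (rule antisym)
        show "Inf (S 0) \<le> 0" using low[of 0 0] sublin_0[OF s] by simp
        show "0 \<le> Inf (S 0)"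
        proof (rule cInf_greatest[OF ne])
          fix r assume "r \<in> S 0"
          then show "0 \<le> r" using lb[of r 0] sublin_0[OF s] by simp
        qed
      qed
      then show ?thesis using True by (simp add: sd)
    next
      case False
      then have tp: "t > 0" using t by simp
      have "S (t *\<^sub>R x) = (\<lambda>r. t * r) ` S x"
      proof (intro set_eqI iffI)
        fix r assume "r \<in> S (t *\<^sub>R x)"
        then obtain u where u: "u \<ge> 0" "r = q (t *\<^sub>R x + u *\<^sub>R a) - u * c" by (auto simp: S_def)
        have "t *\<^sub>R x + u *\<^sub>R a = t *\<^sub>R (x + (u / t) *\<^sub>R a)" using tp by (simp add: algebra_simps)
        then have "q (t *\<^sub>R x + u *\<^sub>R a) = t * q (x + (u / t) *\<^sub>R a)"
          using s tp unfolding sublin_def by simp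
        then have "r = t * (q (x + (u / t) *\<^sub>R a) - (u / t) * c)" using u tp by (simp add: algebra_simps)
        moreover have "q (x + (u / t) *\<^sub>R a) - (u / t) * c \<in> S x" using mem[of "u / t" x] u tp by simp
        ultimately show "r \<in> (\<lambda>r. t * r) ` S x" by blast
      next
        fix r assume "r \<in> (\<lambda>r. t * r) ` S x"
        then obtain u where u: "u \<ge> 0" "r = t * (q (x + u *\<^sub>R a) - u * c)" by (auto simp: S_def)
        have "q (t *\<^sub>R (x + u *\<^sub>R a)) = t * q (x + u *\<^sub>R a)" using s t unfolding sublin_def by simp
        then have "r = q (t *\<^sub>R x + (t * u) *\<^sub>R a) - (t * u) * c" using u by (simp add: algebra_simps)
        then show "r \<in> S (t *\<^sub>R x)" using mem[of "t * u" "t *\<^sub>R x"] u t by simp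
      qed
      then show ?thesis using cInf_scale[OF ne bb tp] by (simp add: sd)
    qed
  qed
qed

lemma hahn_banach_sub:
  fixes q0 :: "'a::real_vector \<Rightarrow> real"
  assumes s0: "sublin q0"
  shows "\<exists>F. (\<forall>x y. F (x + y) = F x + F y) \<and> (\<forall>t x. F (t *\<^sub>R x) = t * F x) \<and> (\<forall>x. F x \<le> q0 x)"
proof -
  define S where "S = {q. sublin q \<and> (\<forall>x. q x \<le> q0 x)}"
  define r where "r = {(q1, q2). q1 \<in> S \<and> q2 \<in> S \<and> (\<forall>x. q2 x \<le> q1 x)}"
  have q0S: "q0 \<in> S" using s0 unfolding S_def by auto
  have Fr: "Field r = S"
  proof
    show "Field r \<subseteq> S" unfolding Field_def r_def by auto
    show "S \<subseteq> Field r" unfolding Field_def r_def by force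
  qed
  have lbS: "q x \<ge> - q0 (- x)" if "q \<in> S" for q x
  proof -
    have "sublin q" "q (- x) \<le> q0 (- x)" using that unfolding S_def by auto
    then show ?thesis using sublin_neg[of q x] by simp
  qed
  have po: "Partial_order r"
    unfolding partial_order_on_def preorder_on_def refl_on_def trans_on_def antisym_on_def Fr
  proof (intro conjI ballI impI)
    show "r \<subseteq> S \<times> S" unfolding r_def by auto
    show "(q, q) \<in> r" if "q \<in> S" for q using that unfolding r_def by auto
    show "(a, c) \<in> r" if "(a, b) \<in> r" "(b, c) \<in> r" for a b c
      using that unfolding r_def by (auto intro: order_trans)
    show "a = b" if "(a, b) \<in> r" "(b, a) \<in> r" for a b
      using that unfolding r_def by (auto intro: antisym)
  qed
  have "\<exists>m\<in>Field r. \<forall>a\<in>Field r. (m, a) \<in> r \<longrightarrow> a = m"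
  proof (rule Zorns_po_lemma[OF po])
    fix C assume C: "C \<in> Chains r"
    show "\<exists>u\<in>Field r. \<forall>a\<in>C. (a, u) \<in> r"
    proof (cases "C = {}")
      case True then show ?thesis using q0S Fr by auto
    next
      case False
      have CS: "C \<subseteq> S"
      proof
        fix q assume "q \<in> C"
        then have "(q, q) \<in> r" using C unfolding Chains_def by blast
        then show "q \<in> S" unfolding r_def by auto
      qed
      have comp: "(\<forall>x. q1 x \<le> q2 x) \<or> (\<forall>x. q2 x \<le> q1 x)" if "q1 \<in> C" "q2 \<in> C" for q1 q2
        using C that unfolding Chains_def r_def by blast
      define u where "u x = Inf ((\<lambda>q. q x) ` C)" for x
      have ne: "(\<lambda>q. q x) ` C \<noteq> {}" for x using False by auto
      have bb: "bdd_below ((\<lambda>q. q x) ` C)" for x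
        unfolding bdd_below_def using lbS CS by blast
      have ul: "u x \<le> q x" if "q \<in> C" for q x unfolding u_def using that bb by (intro cInf_lower) auto
      obtain q1 where q1: "q1 \<in> C" using False by auto
      have uS: "u \<in> S"
        unfolding S_def sublin_def
      proof (intro CollectI conjI allI impI)
        fix x have "q1 x \<le> q0 x" using q1 CS unfolding S_def by blast
        then show "u x \<le> q0 x" using ul[OF q1, of x] by linarith
      next
        fix x y
        have "u (x + y) - u y \<le> u x" unfolding u_def[of x]
        proof (rule cInf_greatest[OF ne])
          fix a assume "a \<in> (\<lambda>q. q x) ` C"
          then obtain qa where qa: "qa \<in> C" "a = qa x" by auto
          have "u (x + y) - a \<le> u y" unfolding u_def[of y]
          proof (rule cInf_greatest[OF ne])
            fix b assume "b \<in> (\<lambda>q. q y) ` C"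
            then obtain qb where qb: "qb \<in> C" "b = qb y" by auto
            have "u (x + y) \<le> qa x + qb y"
            proof (cases "\<forall>z. qa z \<le> qb z")
              case True
              have "sublin qa" using qa CS unfolding S_def by auto
              then have "qa (x + y) \<le> qa x + qa y" unfolding sublin_def by blast
              then show ?thesis using ul[OF qa(1), of "x + y"] True[rule_format, of y] by linarith
            next
              case False
              then have T: "\<forall>z. qb z \<le> qa z" using comp[OF qa(1) qb(1)] by blast
              have "sublin qb" using qb CS unfolding S_def by auto
              then have "qb (x + y) \<le> qb x + qb y" unfolding sublin_def by blast
              then show ?thesis using ul[OF qb(1), of "x + y"] T[rule_format, of x] by linarith
            qed
            then show "u (x + y) - a \<le> b" using qa qb by simp
          qed
          then show "u (x + y) - u y \<le> a" by simp
        qed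
        then show "u (x + y) \<le> u x + u y" by simp
      next
        fix t :: real and x assume t: "t \<ge> 0"
        have sc: "q (t *\<^sub>R x) = t * q x" if "q \<in> C" for q
          using that CS t unfolding S_def sublin_def by blast
        have img: "(\<lambda>q. q (t *\<^sub>R x)) ` C = (\<lambda>a. t * a) ` ((\<lambda>q. q x) ` C)"
          using sc by (auto simp: image_image)
        show "u (t *\<^sub>R x) = t * u x"
        proof (cases "t = 0")
          case True
          have "(\<lambda>q. q (t *\<^sub>R x)) ` C = {0}" using img True False by auto
          then show ?thesis using True unfolding u_def by simp
        next
          case False
          then show ?thesis unfolding u_def img using cInf_scale[OF ne bb] t by simp
        qed
      qed
      show ?thesis using uS ul CS Fr unfolding r_def by auto
    qed
  qed
  then obtain m where mS: "m \<in> S" and mmax: "\<And>a. a \<in> S \<Longrightarrow> (m, a) \<in> r \<Longrightarrow> a = m"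
    using Fr by auto
  have sm: "sublin m" and mq0: "\<And>x. m x \<le> q0 x" using mS unfolding S_def by auto
  have oddm: "m (- a) = - m a" for a
  proof -
    have P: "sublin (shiftf m a (m a))" "\<And>v. shiftf m a (m a) v \<le> m v" "shiftf m a (m a) (- a) \<le> - m a"
      using shiftf_props[OF sm, of "m a" a] by auto
    have "shiftf m a (m a) \<in> S" using P(1) P(2) mq0 unfolding S_def by (auto intro: order_trans)
    moreover then have "(m, shiftf m a (m a)) \<in> r" using mS P(2) unfolding r_def by auto
    ultimately have "shiftf m a (m a) = m" using mmax by blast
    then have "m (- a) \<le> - m a" using P(3) by simp
    moreover have "- m (- a) \<le> m a" using sublin_neg[OF sm] .
    ultimately show ?thesis by linarith
  qed
  have add: "m (x + y) = m x + m y" for x y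
  proof -
    have "m (x + y) \<le> m x + m y" using sm unfolding sublin_def by blast
    moreover have "m (- x + - y) \<le> m (- x) + m (- y)" using sm unfolding sublin_def by blast
    then have "- m (x + y) \<le> - m x + - m y" using oddm[of "x + y"] oddm[of x] oddm[of y] by (simp add: add.commute)
    ultimately show ?thesis by linarith
  qed
  have hom: "m (t *\<^sub>R x) = t * m x" for t x
  proof (cases "t \<ge> 0")
    case True then show ?thesis using sm unfolding sublin_def by blast
  next
    case False
    then have "m ((- t) *\<^sub>R (- x)) = (- t) * m (- x)" using sm unfolding sublin_def by (metis le_less_linear neg_0_le_iff_le order_less_imp_le)
    then show ?thesis using oddm[of x] by simp
  qed
  show ?thesis using add hom mq0 by blast
qed


lemma separation:
  fixes K :: "'a::real_normed_vector set"
  assumes clK: "closed K" and cvK: "convex K" and neK: "K \<noteq> {}" and zK: "z \<notin> K"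
  shows "\<exists>(f::'a \<Rightarrow> real) \<beta>. bounded_linear f \<and> onorm f = 1 \<and> \<beta> < f z \<and> (\<forall>k\<in>K. f k \<le> \<beta>)"
proof -
  obtain k0 where k0: "k0 \<in> K" using neK by auto
  obtain r where rp: "r > 0" and rb: "ball z r \<subseteq> - K"
    using clK zK unfolding closed_def by (meson ComplI open_contains_ball_eq)
  have far: "norm (z - k) \<ge> r" if "k \<in> K" for k
    using rb that by (force simp: dist_norm subset_eq)
  define U where "U = {v. \<exists>k\<in>K. norm (k0 + v - k) < r}"
  have cvU: "convex U"
    unfolding convex_def
  proof (intro ballI allI impI)
    fix x y :: 'a and u v :: real
    assume x: "x \<in> U" and y: "y \<in> U" and uv: "0 \<le> u" "0 \<le> v" "u + v = 1"
    obtain k1 where k1: "k1 \<in> K" "norm (k0 + x - k1) < r" using x unfolding U_def by auto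
    obtain k2 where k2: "k2 \<in> K" "norm (k0 + y - k2) < r" using y unfolding U_def by auto
    have kk: "u *\<^sub>R k1 + v *\<^sub>R k2 \<in> K" using cvK k1 k2 uv unfolding convex_def by blast
    have eq: "k0 + (u *\<^sub>R x + v *\<^sub>R y) - (u *\<^sub>R k1 + v *\<^sub>R k2)
        = u *\<^sub>R (k0 + x - k1) + v *\<^sub>R (k0 + y - k2)"
      using uv by (simp add: algebra_simps scaleR_left_distrib[symmetric])
    have strict: "norm (u *\<^sub>R (k0 + x - k1) + v *\<^sub>R (k0 + y - k2)) < r"
    proof (cases "u = 0")
      case True then show ?thesis using uv k2 by simp
    next
      case False
      then have "u > 0" using uv by simp
      have "norm (u *\<^sub>R (k0 + x - k1) + v *\<^sub>R (k0 + y - k2)) \<le> u * norm (k0 + x - k1) + v * norm (k0 + y - k2)"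
        using uv by (metis (no_types, lifting) abs_of_nonneg norm_scaleR norm_triangle_ineq)
      also have "\<dots> < u * r + v * r"
      proof (rule add_less_le_mono)
        show "u * norm (k0 + x - k1) < u * r" using k1 \<open>u > 0\<close> by simp
        show "v * norm (k0 + y - k2) \<le> v * r" using k2 uv by (simp add: mult_left_mono)
      qed
      also have "\<dots> = r" using uv by (simp add: distrib_right[symmetric])
      finally show ?thesis .
    qed
    show "u *\<^sub>R x + v *\<^sub>R y \<in> U" unfolding U_def
      using kk strict eq by (intro CollectI bexI[of _ "u *\<^sub>R k1 + v *\<^sub>R k2"]) simp_all
  qed
  have ballU: "v \<in> U" if "norm v < r" for v unfolding U_def using k0 that by force
  have U0: "0 \<in> U" using ballU rp by simp
  define z' where "z' = z - k0"
  have z'U: "z' \<notin> U"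
  proof
    assume "z' \<in> U"
    then obtain k where "k \<in> K" "norm (k0 + z' - k) < r" unfolding U_def by auto
    then show False using far[of k] unfolding z'_def by simp
  qed
  have z'0: "z' \<noteq> 0" using z'U U0 by auto
  define T where "T v = {t. 0 < t \<and> inverse t *\<^sub>R v \<in> U}" for v
  define p where "p v = Inf (T v)" for v
  have Tin: "t \<in> T v" if "t > norm v / r" for t v
  proof -
    have tp: "t > 0" using that rp by (meson divide_nonneg_pos le_less_trans norm_ge_zero)
    have "norm v < r * t" using that rp by (simp add: divide_less_eq mult.commute)
    then have "norm (inverse t *\<^sub>R v) < r" using tp by (simp add: field_simps)
    then show ?thesis unfolding T_def using tp ballU by simp
  qed
  have Tne: "T v \<noteq> {}" for v using Tin[of v "norm v / r + 1"] by auto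
  have Tbb: "bdd_below (T v)" for v unfolding bdd_below_def T_def by (rule exI[of _ 0]) auto
  have pbound: "p v \<le> norm v / r" for v
  proof (rule dense_ge)
    fix t assume "norm v / r < t"
    then show "p v \<le> t" unfolding p_def using Tin Tbb by (intro cInf_lower) auto
  qed
  have pU: "p v \<le> 1" if "v \<in> U" for v
    unfolding p_def using that Tbb by (intro cInf_lower) (auto simp: T_def)
  have pz: "p z' \<ge> 1"
    unfolding p_def
  proof (rule cInf_greatest[OF Tne])
    fix t assume t: "t \<in> T z'"
    show "1 \<le> t"
    proof (rule ccontr)
      assume "\<not> 1 \<le> t"
      then have t1: "t < 1" by simp
      have tp: "t > 0" and w: "inverse t *\<^sub>R z' \<in> U" using t unfolding T_def by auto
      have "t *\<^sub>R (inverse t *\<^sub>R z') + (1 - t) *\<^sub>R 0 \<in> U"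
        using cvU w U0 tp t1 unfolding convex_def by (intro cvU[unfolded convex_def, rule_format]) auto
      then show False using tp z'U by simp
    qed
  qed
  have sp: "sublin p"
    unfolding sublin_def
  proof (intro conjI allI impI)
    fix x y
    have "p (x + y) - p y \<le> p x" unfolding p_def[of x]
    proof (rule cInf_greatest[OF Tne])
      fix a assume a: "a \<in> T x"
      have "p (x + y) - a \<le> p y" unfolding p_def[of y]
      proof (rule cInf_greatest[OF Tne])
        fix b assume b: "b \<in> T y"
        have ap: "a > 0" "inverse a *\<^sub>R x \<in> U" and bp: "b > 0" "inverse b *\<^sub>R y \<in> U"
          using a b unfolding T_def by auto
        have "(a / (a + b)) *\<^sub>R (inverse a *\<^sub>R x) + (b / (a + b)) *\<^sub>R (inverse b *\<^sub>R y) \<in> U"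
          using ap bp by (intro cvU[unfolded convex_def, rule_format]) (auto simp: add_divide_distrib[symmetric])
        moreover have "(a / (a + b)) *\<^sub>R (inverse a *\<^sub>R x) + (b / (a + b)) *\<^sub>R (inverse b *\<^sub>R y)
            = inverse (a + b) *\<^sub>R (x + y)"
          using ap bp by (simp add: scaleR_add_right field_simps)
        ultimately have "a + b \<in> T (x + y)" unfolding T_def using ap bp by simp
        then have "p (x + y) \<le> a + b" unfolding p_def using Tbb by (intro cInf_lower)
        then show "p (x + y) - a \<le> b" by simp
      qed
      then show "p (x + y) - p y \<le> a" by simp
    qed
    then show "p (x + y) \<le> p x + p y" by simp
  next
    fix t :: real and x assume t: "t \<ge> 0"
    show "p (t *\<^sub>R x) = t * p x"
    proof (cases "t = 0")
      case True
      have "T 0 = {0<..}" unfolding T_def using U0 by auto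
      then show ?thesis using True unfolding p_def by simp
    next
      case False
      then have tp: "t > 0" using t by simp
      have "T (t *\<^sub>R x) = (\<lambda>a. t * a) ` T x"
      proof (intro set_eqI iffI)
        fix s assume "s \<in> T (t *\<^sub>R x)"
        then have s: "s > 0" "inverse s *\<^sub>R (t *\<^sub>R x) \<in> U" unfolding T_def by auto
        have "inverse (s / t) *\<^sub>R x = inverse s *\<^sub>R (t *\<^sub>R x)" using tp s by (simp add: field_simps)
        then have "inverse (s / t) *\<^sub>R x \<in> U" using s(2) by metis
        then have "s / t \<in> T x" unfolding T_def using s tp by simp
        moreover have "s = t * (s / t)" using tp by simp
        ultimately show "s \<in> (\<lambda>a. t * a) ` T x" by blast
      next
        fix s assume "s \<in> (\<lambda>a. t * a) ` T x"
        then obtain a where a: "a \<in> T x" "s = t * a" by auto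
        then have ap: "a > 0" "inverse a *\<^sub>R x \<in> U" unfolding T_def by auto
        have "inverse (t * a) *\<^sub>R (t *\<^sub>R x) = inverse a *\<^sub>R x" using tp ap by (simp add: field_simps)
        then have "inverse (t * a) *\<^sub>R (t *\<^sub>R x) \<in> U" using ap(2) by metis
        then show "s \<in> T (t *\<^sub>R x)" unfolding T_def using a ap tp by simp
      qed
      then show ?thesis unfolding p_def using cInf_scale[OF Tne Tbb tp] by simp
    qed
  qed
  define q0 where "q0 = shiftf p z' (p z')"
  have q0: "sublin q0" "\<And>v. q0 v \<le> p v" "q0 (- z') \<le> - p z'"
    using shiftf_props[OF sp, of "p z'" z'] unfolding q0_def by auto
  obtain F where Fadd: "\<And>x y. F (x + y) = F x + F y" and Fsc: "\<And>t x. F (t *\<^sub>R x) = t * F x"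
    and Fle: "\<And>x. F x \<le> q0 x"
    using hahn_banach_sub[OF q0(1)] by blast
  have Fneg: "F (- x) = - F x" for x using Fsc[of "-1" x] by simp
  have Fdiff: "F (x - y) = F x - F y" for x y using Fadd[of x "- y"] Fneg[of y] by simp
  have Fp: "F x \<le> p x" for x using Fle q0(2) order_trans by blast
  have Fz: "F z' \<ge> 1" using Fle[of "- z'"] q0(3) Fneg[of z'] pz by simp
  have Fbd: "norm (F x) \<le> norm x * (1 / r)" for x
  proof -
    have "F x \<le> norm x / r" using Fp pbound order_trans by blast
    moreover have "- F x \<le> norm x / r" using Fp[of "- x"] pbound[of "- x"] Fneg by simp
    ultimately show ?thesis by simp
  qed
  have blF: "bounded_linear F"
    by (rule bounded_linear_intro[OF Fadd _ Fbd]) (simp add: Fsc)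
  define \<delta> where "\<delta> = (r / 2) / norm z'"
  have dp: "\<delta> > 0" unfolding \<delta>_def using rp z'0 by simp
  have Kb: "F k \<le> F z - \<delta>" if "k \<in> K" for k
  proof -
    define w where "w = \<delta> *\<^sub>R z'"
    have nw: "norm w = r / 2" unfolding w_def \<delta>_def using z'0 rp by simp
    have "k - k0 + w \<in> U" unfolding U_def using that nw rp by (intro CollectI bexI[of _ k]) auto
    then have "F (k - k0 + w) \<le> 1" using Fp pU order_trans by blast
    then have "F k - F k0 + \<delta> * F z' \<le> 1" using Fadd Fdiff Fsc unfolding w_def by simp
    moreover have "\<delta> * F z' \<ge> \<delta>" using Fz dp by simp
    moreover have "F z' = F z - F k0" unfolding z'_def by (rule Fdiff)
    ultimately show ?thesis using Fz by linarith
  qed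
  have onp: "onorm F > 0" using onorm_pos_lt[OF blF] Fz by auto
  define f where "f x = inverse (onorm F) *\<^sub>R F x" for x
  have blf: "bounded_linear f" unfolding f_def[abs_def]
    by (rule bounded_linear_compose[OF bounded_linear_scaleR_right blF])
  have onf: "onorm f = 1" unfolding f_def using onorm_scaleR[OF blF, of "inverse (onorm F)"] onp by simp
  have "\<forall>k\<in>K. f k \<le> (F z - \<delta>) / onorm F" unfolding f_def using Kb onp by (simp add: divide_right_mono field_simps)
  moreover have "(F z - \<delta>) / onorm F < f z" unfolding f_def using dp onp by (simp add: divide_strict_right_mono field_simps)
  ultimately show ?thesis using blf onf by (intro exI[of _ f] exI[of _ "(F z - \<delta>) / onorm F"]) auto
qed



lemma sum_lessThan_add_nat: "(\<Sum>i<n + m. g i) = (\<Sum>i<n. g i) + (\<Sum>i<m. g (n + i))"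
  for g :: "nat \<Rightarrow> 'b::comm_monoid_add"
  by (induction m) (auto simp: add.assoc)

lemma rcc_single: "a \<in> A \<Longrightarrow> a \<in> rat_convex_combs A"
  unfolding rat_convex_combs_def
  by (intro CollectI exI[of _ "1::nat"] exI[of _ "\<lambda>_. 1::real"] exI[of _ "\<lambda>_. a"]) auto

lemma rcc_combine:
  assumes u: "u \<in> rat_convex_combs A" and w: "w \<in> rat_convex_combs A"
    and mu: "\<mu> \<in> \<rat>" "0 \<le> \<mu>" "\<mu> \<le> 1"
  shows "\<mu> *\<^sub>R u + (1 - \<mu>) *\<^sub>R w \<in> rat_convex_combs A"
proof -
  obtain n c v where cv0: "(\<forall>i<(n::nat). c i \<in> \<rat> \<and> c i \<ge> 0 \<and> v i \<in> A) \<and> (\<Sum>i<n. c i) = 1 \<and>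
    u = (\<Sum>i<n. c i *\<^sub>R v i)" using u unfolding rat_convex_combs_def mem_Collect_eq by (elim exE) (rule that)
  have cv: "\<forall>i<n. c i \<in> \<rat> \<and> c i \<ge> 0 \<and> v i \<in> A" "(\<Sum>i<n. c i) = 1" "u = (\<Sum>i<n. c i *\<^sub>R v i)"
    using cv0 by blast+
  obtain m d y where dy0: "(\<forall>i<(m::nat). d i \<in> \<rat> \<and> d i \<ge> 0 \<and> y i \<in> A) \<and> (\<Sum>i<m. d i) = 1 \<and>
    w = (\<Sum>i<m. d i *\<^sub>R y i)" using w unfolding rat_convex_combs_def mem_Collect_eq by (elim exE) (rule that)
  have dy: "\<forall>i<m. d i \<in> \<rat> \<and> d i \<ge> 0 \<and> y i \<in> A" "(\<Sum>i<m. d i) = 1" "w = (\<Sum>i<m. d i *\<^sub>R y i)"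
    using dy0 by blast+
  define C where "C i = (if i < n then \<mu> * c i else (1 - \<mu>) * d (i - n))" for i
  define V where "V i = (if i < n then v i else y (i - n))" for i
  have s1: "(\<Sum>i<n + m. C i) = 1"
    unfolding sum_lessThan_add_nat C_def using cv(2) dy(2)
    by (simp add: sum_distrib_left[symmetric])
  have s2: "(\<Sum>i<n + m. C i *\<^sub>R V i) = \<mu> *\<^sub>R u + (1 - \<mu>) *\<^sub>R w"
    unfolding sum_lessThan_add_nat C_def V_def cv(3) dy(3)
    by (simp add: scaleR_sum_right)
  have s3: "\<forall>i<n + m. C i \<in> \<rat> \<and> C i \<ge> 0 \<and> V i \<in> A"
  proof (intro allI impI)
    fix i assume i: "i < n + m"
    show "C i \<in> \<rat> \<and> C i \<ge> 0 \<and> V i \<in> A"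
    proof (cases "i < n")
      case True
      have "c i \<in> \<rat>" "c i \<ge> 0" "v i \<in> A" using cv(1) True by auto
      then show ?thesis using mu True unfolding C_def V_def by (simp add: Rats_mult)
    next
      case False then have "i - n < m" using i by auto
      then have "d (i - n) \<in> \<rat>" "d (i - n) \<ge> 0" "y (i - n) \<in> A" using dy(1) by auto
      moreover have "1 - \<mu> \<in> \<rat>" using mu by (simp add: Rats_diff)
      ultimately show ?thesis using mu False unfolding C_def V_def by (simp add: Rats_mult)
    qed
  qed
  show ?thesis unfolding rat_convex_combs_def
    using s1 s2 s3 by (intro CollectI exI[of _ "n + m"] exI[of _ C] exI[of _ V]) simp
qed

lemma rat_closed_hull_convex: "convex (rat_closed_hull A)"
  unfolding convex_alt rat_closed_hull_def
proof (intro ballI allI impI)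
  fix u w and l :: real
  assume u: "u \<in> closure (rat_convex_combs A)" and w: "w \<in> closure (rat_convex_combs A)"
    and l: "0 \<le> l \<and> l \<le> 1"
  show "(1 - l) *\<^sub>R u + l *\<^sub>R w \<in> closure (rat_convex_combs A)"
    unfolding closure_approachable
  proof (intro allI impI)
    fix e :: real assume e: "e > 0"
    define M where "M = norm (u - w) + 1"
    have Mp: "M > 0" unfolding M_def by (simp add: add_nonneg_pos)
    obtain u' where u': "u' \<in> rat_convex_combs A" "dist u' u < e / 2"
      using u e unfolding closure_approachable by (meson half_gt_zero)
    obtain w' where w': "w' \<in> rat_convex_combs A" "dist w' w < e / 2"
      using w e unfolding closure_approachable by (meson half_gt_zero)
    obtain \<mu> where mu: "\<mu> \<in> \<rat>" "0 \<le> \<mu>" "\<mu> \<le> 1" "\<bar>\<mu> - l\<bar> < e / (2 * M)"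
    proof (cases "l < 1")
      case True
      have "l < min 1 (l + e / (2 * M))" using True e Mp by simp
      then obtain q where "q \<in> \<rat>" "l < q" "q < min 1 (l + e / (2 * M))" using Rats_dense_in_real by blast
      then show ?thesis using that[of q] l by auto
    next
      case False then have "l = 1" using l by simp
      then show ?thesis using that[of 1] e Mp by simp
    qed
    define yv where "yv = (1 - \<mu>) *\<^sub>R u' + \<mu> *\<^sub>R w'"
    have yin: "yv \<in> rat_convex_combs A" unfolding yv_def
      using rcc_combine[OF w' (1) u'(1), of \<mu>] mu by (simp add: add.commute)
    have eq: "yv - ((1 - l) *\<^sub>R u + l *\<^sub>R w) = (1 - \<mu>) *\<^sub>R (u' - u) + \<mu> *\<^sub>R (w' - w) + (l - \<mu>) *\<^sub>R (u - w)"
      unfolding yv_def by (simp add: algebra_simps)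
    have "norm ((1 - \<mu>) *\<^sub>R (u' - u) + \<mu> *\<^sub>R (w' - w) + (l - \<mu>) *\<^sub>R (u - w))
        \<le> (1 - \<mu>) * norm (u' - u) + \<mu> * norm (w' - w) + \<bar>l - \<mu>\<bar> * norm (u - w)"
    proof -
      have "norm ((1 - \<mu>) *\<^sub>R (u' - u) + \<mu> *\<^sub>R (w' - w) + (l - \<mu>) *\<^sub>R (u - w))
          \<le> norm ((1 - \<mu>) *\<^sub>R (u' - u)) + norm (\<mu> *\<^sub>R (w' - w)) + norm ((l - \<mu>) *\<^sub>R (u - w))"
        by (meson add_mono norm_triangle_ineq order_trans order_refl)
      then show ?thesis using mu by simp
    qed
    also have "(1 - \<mu>) * norm (u' - u) \<le> (1 - \<mu>) * (e / 2)" using u' mu by (intro mult_left_mono) (auto simp: dist_norm)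
    also have "\<mu> * norm (w' - w) \<le> \<mu> * (e / 2)" using w' mu by (intro mult_left_mono) (auto simp: dist_norm)
    also have "\<bar>l - \<mu>\<bar> * norm (u - w) \<le> \<bar>l - \<mu>\<bar> * M" unfolding M_def by (intro mult_left_mono) auto
    also have "\<bar>l - \<mu>\<bar> * M < e / (2 * M) * M" using mu(4) Mp by (intro mult_strict_right_mono) (auto simp: abs_minus_commute)
    also have "(1 - \<mu>) * (e / 2) + \<mu> * (e / 2) + e / (2 * M) * M = e" using Mp by (simp add: field_simps)
    finally show "\<exists>y\<in>rat_convex_combs A. dist y ((1 - l) *\<^sub>R u + l *\<^sub>R w) < e"
      using yin eq by (intro bexI[of _ yv]) (auto simp: dist_norm)
  qed
qed

lemma hull_sub_rch: "closure (convex hull A) \<subseteq> rat_closed_hull A"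
proof -
  have "convex hull A \<subseteq> rat_closed_hull A"
    using rat_closed_hull_convex[of A] rcc_single[of _ A] closure_subset[of "rat_convex_combs A"]
    unfolding rat_closed_hull_def by (intro hull_minimal) auto
  then show ?thesis by (intro closure_minimal) (auto simp: rat_closed_hull_def)
qed

lemma rcc_max:
  assumes "w \<in> rat_convex_combs A" "bounded_linear f"
  shows "\<exists>y\<in>A. f w \<le> (f y :: real)"
proof -
  obtain n c v where cv0: "(\<forall>i<(n::nat). c i \<in> \<rat> \<and> c i \<ge> 0 \<and> v i \<in> A) \<and> (\<Sum>i<n. c i) = 1 \<and>
    w = (\<Sum>i<n. c i *\<^sub>R v i)" using assms(1) unfolding rat_convex_combs_def mem_Collect_eq by (elim exE) (rule that)
  have cv: "\<forall>i<n. c i \<in> \<rat> \<and> c i \<ge> 0 \<and> v i \<in> A" "(\<Sum>i<n. c i) = 1" "w = (\<Sum>i<n. c i *\<^sub>R v i)"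
    using cv0 by blast+
  have "n \<noteq> 0" using cv(2) by (metis lessThan_0 sum.empty zero_neq_one)
  then have ne: "(\<lambda>i. f (v i)) ` {..<n} \<noteq> {}" by auto
  define Mx where "Mx = Max ((\<lambda>i. f (v i)) ` {..<n})"
  obtain j where j: "j < n" "f (v j) = Mx" using Max_in[OF _ ne] unfolding Mx_def by auto
  have le: "f (v i) \<le> Mx" if "i < n" for i unfolding Mx_def using that by (intro Max_ge) auto
  have "f w = (\<Sum>i<n. c i * f (v i))"
    unfolding cv(3) using assms(2) by (simp add: linear_sum[OF bounded_linear.linear] linear_scale[OF bounded_linear.linear])
  also have "\<dots> \<le> (\<Sum>i<n. c i * Mx)" using cv(1) le by (intro sum_mono mult_left_mono) auto
  also have "\<dots> = Mx" using cv(2) by (simp add: sum_distrib_right[symmetric])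
  finally show ?thesis using j cv(1) by (intro bexI[of _ "v j"]) auto
qed



lemma ball_img:
  fixes y :: "'a::real_normed_vector"
  assumes "m > 0"
  shows "y \<in> (\<lambda>u. m *\<^sub>R u) ` ball 0 1 \<longleftrightarrow> norm y < m"
proof
  assume "y \<in> (\<lambda>u. m *\<^sub>R u) ` ball 0 1"
  then obtain u where "norm u < 1" "y = m *\<^sub>R u" by auto
  then show "norm y < m" using assms by simp
next
  assume "norm y < m"
  then have "norm (inverse m *\<^sub>R y) < 1" using assms by (simp add: field_simps)
  moreover have "y = m *\<^sub>R (inverse m *\<^sub>R y)" using assms by simp
  ultimately show "y \<in> (\<lambda>u. m *\<^sub>R u) ` ball 0 1" by (intro image_eqI[of _ _ "inverse m *\<^sub>R y"]) auto
qed

lemma onorm1_bound: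
  assumes "bounded_linear f" "onorm f = 1"
  shows "\<bar>f x\<bar> \<le> norm (x::'a::real_normed_vector)"
  using onorm[OF assms(1), of x] assms(2) by simp

lemma onorm1_witness:
  fixes f :: "'a::real_normed_vector \<Rightarrow> real"
  assumes bl: "bounded_linear f" and on: "onorm f = 1" and b: "0 \<le> b" "b < 1"
  shows "\<exists>u. norm u = 1 \<and> f u > b"
proof (rule ccontr)
  assume "\<not> ?thesis"
  then have H: "norm u = 1 \<Longrightarrow> f u \<le> b" for u by force
  have "norm (f v) \<le> b * norm v" for v
  proof (cases "v = 0")
    case True then show ?thesis using linear_0[OF bounded_linear.linear[OF bl]] by simp
  next
    case False
    define u where "u = inverse (norm v) *\<^sub>R v"
    have nu: "norm u = 1" "norm (- u) = 1" using False unfolding u_def by auto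
    have v: "v = norm v *\<^sub>R u" using False unfolding u_def by simp
    have fv: "f v = norm v * f u" by (subst v) (simp add: linear_scale[OF bounded_linear.linear[OF bl]])
    have fn: "f (- u) = - f u" by (simp add: linear_neg[OF bounded_linear.linear[OF bl]])
    have "f u \<le> b" "- f u \<le> b" using H[OF nu(1)] H[OF nu(2)] fn by auto
    then have "\<bar>f u\<bar> \<le> b" by simp
    then have "norm v * \<bar>f u\<bar> \<le> norm v * b" by (intro mult_left_mono) auto
    then show ?thesis using fv by (simp add: abs_mult mult.commute)
  qed
  then have "onorm f \<le> b" using b by (intro onorm_bound) auto
  then show False using on b by simp
qed

lemma dir2:
  fixes D :: "'a::banach set"
  assumes dense: "closure D = UNIV"
  and R: "\<forall>\<epsilon>>0. \<forall>x\<in>D. \<forall>z\<in>D. norm z \<ge> norm x \<or>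
       z \<in> rat_closed_hull
              {y \<in> ((\<lambda>u. norm x *\<^sub>R u) ` ball 0 1) \<inter> D. norm (x - y) > 2 * norm x - \<epsilon>}"
  shows "daugavet TYPE('a)"
  unfolding daugavet_def
proof (intro allI impI, elim conjE)
  fix \<epsilon> :: real and x :: 'a and f :: "'a \<Rightarrow> real" and \<alpha> :: real
  assume ep: "\<epsilon> > 0" and nx: "norm x = 1" and bl: "bounded_linear f" and on: "onorm f = 1" and al: "\<alpha> > 0"
  have dn: "\<exists>d\<in>D. norm (d - p) < e" if "e > 0" for p e
    using dense that unfolding set_eq_iff closure_approachable by (auto simp: dist_norm)
  have fb: "\<bar>f v\<bar> \<le> norm v" for v using onorm1_bound[OF bl on] .
  have flin: "linear f" using bl by (rule bounded_linear.linear)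
  define a where "a = min \<alpha> 1"
  have a: "0 < a" "a \<le> 1" "a \<le> \<alpha>" unfolding a_def using al by auto
  define \<theta> where "\<theta> = min (\<epsilon> / 4) (a / 4)"
  have th: "0 < \<theta>" "\<theta> \<le> \<epsilon> / 4" "\<theta> \<le> a / 4" unfolding \<theta>_def using ep a by auto
  obtain u where u: "norm u = 1" "f u > 1 - a / 4"
    using onorm1_witness[OF bl on, of "1 - a / 4"] a by auto
  obtain z where zD: "z \<in> D" and zc: "norm (z - (1 - \<theta>) *\<^sub>R u) < \<theta> / 2" using dn[of "\<theta> / 2"] th by auto
  obtain x' where xD: "x' \<in> D" and xc: "norm (x' - x) < \<theta> / 2" using dn[of "\<theta> / 2"] th by auto
  have nz: "norm z < 1 - \<theta> / 2"
  proof -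
    have "norm z \<le> norm ((1 - \<theta>) *\<^sub>R u) + norm (z - (1 - \<theta>) *\<^sub>R u)" by (rule norm_triangle_sub)
    moreover have "norm ((1 - \<theta>) *\<^sub>R u) = 1 - \<theta>" using u th a by simp
    ultimately show ?thesis using zc by linarith
  qed
  have nx'1: "norm x' > 1 - \<theta> / 2" and nx'2: "norm x' < 1 + \<theta> / 2"
  proof -
    have "norm x \<le> norm x' + norm (x' - x)" by (metis norm_triangle_sub norm_minus_commute)
    then show "norm x' > 1 - \<theta> / 2" using xc nx by linarith
    have "norm x' \<le> norm x + norm (x' - x)" by (rule norm_triangle_sub)
    then show "norm x' < 1 + \<theta> / 2" using xc nx by linarith
  qed
  have fz: "f z > (1 - \<theta>) * (1 - a / 4) - \<theta> / 2"
  proof -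
    have "f z = f ((1 - \<theta>) *\<^sub>R u) + f (z - (1 - \<theta>) *\<^sub>R u)" by (simp add: linear_diff[OF flin])
    moreover have "f ((1 - \<theta>) *\<^sub>R u) = (1 - \<theta>) * f u" by (simp add: linear_scale[OF flin])
    moreover have "f (z - (1 - \<theta>) *\<^sub>R u) > - (\<theta> / 2)" using fb[of "z - (1 - \<theta>) *\<^sub>R u"] zc by linarith
    moreover have "(1 - \<theta>) * f u \<ge> (1 - \<theta>) * (1 - a / 4)" using u th a by (intro mult_left_mono) auto
    ultimately show ?thesis by linarith
  qed
  define A where "A = {y \<in> ((\<lambda>u. norm x' *\<^sub>R u) ` ball 0 1) \<inter> D. norm (x' - y) > 2 * norm x' - \<epsilon> / 2}"
  have "norm z < norm x'" using nz nx'1 by linarith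
  moreover have "norm z \<ge> norm x' \<or> z \<in> rat_closed_hull A"
    using R ep xD zD unfolding A_def by (meson half_gt_zero)
  ultimately have "z \<in> rat_closed_hull A" by linarith
  then obtain w where w: "w \<in> rat_convex_combs A" "dist w z < \<theta> / 2"
    unfolding rat_closed_hull_def closure_approachable using th by (meson half_gt_zero)
  obtain y where yA: "y \<in> A" and fy: "f w \<le> f y" using rcc_max[OF w(1) bl] by auto
  have fw: "f w > f z - \<theta> / 2"
  proof -
    have "f w = f z + f (w - z)" by (simp add: linear_diff[OF flin])
    moreover have "f (w - z) > - (\<theta> / 2)" using fb[of "w - z"] w(2) unfolding dist_norm by linarith
    ultimately show ?thesis by linarith
  qed
  have x'p: "norm x' > 0" using nx'1 th a by linarith
  have ny: "norm y < norm x'" and dy: "norm (x' - y) > 2 * norm x' - \<epsilon> / 2"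
    using yA ball_img[OF x'p] unfolding A_def by auto
  define s where "s = 1 + \<theta> / 2"
  have sp: "s > 0" "s \<ge> 1" unfolding s_def using th by auto
  define y' where "y' = inverse s *\<^sub>R y"
  show "\<exists>y. norm y \<le> 1 \<and> 1 - \<alpha> < f y \<and> 2 - \<epsilon> < norm (x - y)"
  proof (intro exI[of _ y'] conjI)
    have nys: "norm y < s" using ny nx'2 unfolding s_def by linarith
    then show "norm y' \<le> 1" unfolding y'_def using sp by (simp add: field_simps)
    have "f y > (1 - \<theta>) * (1 - a / 4) - \<theta>" using fy fw fz by linarith
    moreover have "(1 - \<theta>) * (1 - a / 4) \<ge> 1 - a / 4 - \<theta>"
    proof -
      have "\<theta> * (1 - a / 4) \<le> \<theta>" using th a by (simp add: mult_left_le)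
      then show ?thesis by (simp add: algebra_simps)
    qed
    ultimately have fy2: "f y > 1 - a / 4 - 2 * \<theta>" by linarith
    have "(1 - a) * s \<le> 1 - a + \<theta> / 2"
    proof -
      have "(1 - a) * (\<theta> / 2) \<le> \<theta> / 2" using a th by (simp add: mult_left_le_one_le)
      then show ?thesis unfolding s_def by (simp add: algebra_simps)
    qed
    also have "\<dots> \<le> 1 - a / 4 - 2 * \<theta>" using th by linarith
    finally have "(1 - a) * s < f y" using fy2 by linarith
    then have "1 - a < f y / s" using sp by (simp add: field_simps)
    moreover have "f y' = f y / s" unfolding y'_def by (simp add: linear_scale[OF flin] field_simps)
    ultimately show "1 - \<alpha> < f y'" using a by linarith
    have "norm (y - y') = norm y * (1 - inverse s)"
    proof -
      have "y - y' = (1 - inverse s) *\<^sub>R y" unfolding y'_def by (simp add: algebra_simps)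
      moreover have "1 - inverse s \<ge> 0" using sp by (simp add: field_simps)
      ultimately show ?thesis by (simp add: mult.commute)
    qed
    also have "\<dots> \<le> s * (1 - inverse s)" using nys sp by (intro mult_right_mono) (auto simp: field_simps)
    also have "\<dots> = \<theta> / 2" using sp unfolding s_def by (simp add: field_simps)
    finally have yy: "norm (y - y') \<le> \<theta> / 2" .
    have "norm (x' - y) \<le> norm (x' - x) + norm (x - y') + norm (y' - y)"
    proof -
      have "x' - y = (x' - x) + (x - y') + (y' - y)" by simp
      then have "norm (x' - y) \<le> norm ((x' - x) + (x - y')) + norm (y' - y)" by (metis norm_triangle_ineq)
      moreover have "norm ((x' - x) + (x - y')) \<le> norm (x' - x) + norm (x - y')" by (rule norm_triangle_ineq)
      ultimately show ?thesis by linarith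
    qed
    then show "2 - \<epsilon> < norm (x - y')"
      using dy xc yy nx'1 th norm_minus_commute[of y' y] by linarith
  qed
qed


lemma dir1:
  fixes D :: "'a::banach set"
  assumes dense: "closure D = UNIV" and dg: "daugavet TYPE('a)"
  shows "\<forall>\<epsilon>>0. \<forall>x\<in>D. \<forall>z\<in>D. norm z \<ge> norm x \<or>
       z \<in> rat_closed_hull
              {y \<in> ((\<lambda>u. norm x *\<^sub>R u) ` ball 0 1) \<inter> D. norm (x - y) > 2 * norm x - \<epsilon>}"
proof (intro allI impI ballI)
  fix \<epsilon> :: real and x z :: 'a
  assume ep: "\<epsilon> > 0" and xD: "x \<in> D" and zD: "z \<in> D"
  define A where "A = {y \<in> ((\<lambda>u. norm x *\<^sub>R u) ` ball 0 1) \<inter> D. norm (x - y) > 2 * norm x - \<epsilon>}"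
  show "norm z \<ge> norm x \<or> z \<in> rat_closed_hull A"
  proof (cases "norm z \<ge> norm x")
    case True then show ?thesis by simp
  next
    case False
    then have zx: "norm z < norm x" by simp
    define m where "m = norm x"
    have mp: "m > 0" unfolding m_def using zx by (meson norm_ge_zero le_less_trans)
    have dn: "\<exists>d\<in>D. norm (d - p) < e" if "e > 0" for p e
      using dense that unfolding set_eq_iff closure_approachable by (auto simp: dist_norm)
    define K where "K = closure (convex hull A)"
    have AK: "A \<subseteq> K" unfolding K_def using hull_subset[of A convex] closure_subset[of "convex hull A"] by (rule order_trans)
    have "z \<in> K"
    proof (rule ccontr)
      assume zK: "z \<notin> K"
      have "\<exists>(f::'a \<Rightarrow> real) \<beta>. bounded_linear f \<and> onorm f = 1 \<and> \<beta> < f z \<and> (\<forall>k\<in>K. f k \<le> \<beta>)"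
      proof (cases "A = {}")
        case True
        then have Ke: "K = {}" unfolding K_def by simp
        have "x \<noteq> 0" using mp unfolding m_def by auto
        then have "z \<notin> {z + x}" by simp
        then obtain f :: "'a \<Rightarrow> real" and \<beta> where "bounded_linear f" "onorm f = 1"
          using separation[of "{z + x}" z] by (auto simp: convex_singleton)
        then show ?thesis using Ke by (intro exI[of _ f] exI[of _ "f z - 1"]) auto
      next
        case False
        show ?thesis using separation[of K z] zK False unfolding K_def
          by (simp add: convex_closure convex_convex_hull)
      qed
      then obtain f :: "'a \<Rightarrow> real" and \<beta> where bl: "bounded_linear f" and on: "onorm f = 1"
        and bz: "\<beta> < f z" and bK: "\<And>k. k \<in> K \<Longrightarrow> f k \<le> \<beta>" by blast
      have fb: "\<bar>f v\<bar> \<le> norm v" for v using onorm1_bound[OF bl on] .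
      have flin: "linear f" using bl by (rule bounded_linear.linear)
      define \<delta> where "\<delta> = f z - \<beta>"
      have dp: "\<delta> > 0" unfolding \<delta>_def using bz by simp
      have fzm: "f z < m" using fb[of z] zx unfolding m_def by linarith
      define x1 where "x1 = inverse m *\<^sub>R x"
      have nx1: "norm x1 = 1" unfolding x1_def m_def using mp m_def by simp
      define \<alpha> where "\<alpha> = 1 - (f z - \<delta> / 2) / m"
      have ap: "\<alpha> > 0" unfolding \<alpha>_def using fzm dp mp by (simp add: field_simps)
      have ep2: "\<epsilon> / (2 * m) > 0" using ep mp by simp
      obtain y1 where y1: "norm y1 \<le> 1" "f y1 > 1 - \<alpha>" "norm (x1 - y1) > 2 - \<epsilon> / (2 * m)"
        using dg[unfolded daugavet_def, rule_format, OF ep2 nx1, of f \<alpha>] bl on ap by auto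
      define \<theta> where "\<theta> = min (min \<delta> \<epsilon>) m / 8"
      have th: "\<theta> > 0" "\<theta> \<le> \<delta> / 8" "\<theta> \<le> \<epsilon> / 8" "\<theta> \<le> m / 8" unfolding \<theta>_def using dp ep mp by (auto simp: min_def)
      define y2 where "y2 = (m - \<theta>) *\<^sub>R y1"
      obtain d where dD: "d \<in> D" and dc: "norm (d - y2) < \<theta>" using dn[of \<theta>] th by auto
      have ny2: "norm y2 \<le> m - \<theta>" unfolding y2_def using y1(1) th
        by (simp add: mult_left_le)
      have nd: "norm d < m"
      proof -
        have "norm d \<le> norm y2 + norm (d - y2)" by (rule norm_triangle_sub)
        then show ?thesis using ny2 dc by linarith
      qed
      have mf: "m * f y1 > f z - \<delta> / 2" using y1(2) mp unfolding \<alpha>_def by (simp add: field_simps)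
      have fd: "f d > \<beta>"
      proof -
        have "f d = f y2 + f (d - y2)" by (simp add: linear_diff[OF flin])
        moreover have "f (d - y2) > - \<theta>" using fb[of "d - y2"] dc by linarith
        moreover have "f y2 = m * f y1 - \<theta> * f y1" unfolding y2_def by (simp add: linear_scale[OF flin] left_diff_distrib)
        moreover have "\<theta> * f y1 \<le> \<theta>" using fb[of y1] y1(1) th by (simp add: mult_left_le)
        ultimately have "f d > f z - \<delta> / 2 - 2 * \<theta>" using mf by linarith
        then have "f d > f z - \<delta>" using th dp by linarith
        then show ?thesis unfolding \<delta>_def by simp
      qed
      have dA: "d \<in> A"
      proof -
        have "x - m *\<^sub>R y1 = m *\<^sub>R (x1 - y1)" unfolding x1_def using mp by (simp add: algebra_simps)
        then have e1: "norm (x - m *\<^sub>R y1) = m * norm (x1 - y1)" using mp by simp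
        have "m * norm (x1 - y1) > m * (2 - \<epsilon> / (2 * m))" using y1(3) mp by simp
        also have "m * (2 - \<epsilon> / (2 * m)) = 2 * m - \<epsilon> / 2" using mp by (simp add: field_simps)
        finally have e2: "norm (x - m *\<^sub>R y1) > 2 * m - \<epsilon> / 2" using e1 by simp
        have "m *\<^sub>R y1 - y2 = \<theta> *\<^sub>R y1" unfolding y2_def by (simp add: scaleR_diff_left)
        then have e3: "norm (m *\<^sub>R y1 - y2) \<le> \<theta>" using y1(1) th by (simp add: mult_left_le)
        have "x - m *\<^sub>R y1 = (x - d) + (d - y2) + (y2 - m *\<^sub>R y1)" by simp
        then have "norm (x - m *\<^sub>R y1) \<le> norm ((x - d) + (d - y2)) + norm (y2 - m *\<^sub>R y1)" by (metis norm_triangle_ineq)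
        moreover have "norm ((x - d) + (d - y2)) \<le> norm (x - d) + norm (d - y2)" by (rule norm_triangle_ineq)
        moreover have "norm (y2 - m *\<^sub>R y1) = norm (m *\<^sub>R y1 - y2)" by (rule norm_minus_commute)
        ultimately have "norm (x - d) > 2 * m - \<epsilon>" using e2 e3 dc th by linarith
        moreover have "d \<in> (\<lambda>u. norm x *\<^sub>R u) ` ball 0 1" using ball_img[of m d] mp nd unfolding m_def by simp
        ultimately show ?thesis unfolding A_def m_def using dD by simp
      qed
      show False using bK[of d] AK dA fd by auto
    qed
    then show ?thesis using hull_sub_rch[of A] unfolding K_def by auto
  qed
qed


theorem lemma5p7:
  fixes D :: "'a::banach set"
  assumes "closure D = UNIV"
  shows "daugavet TYPE('a) \<longleftrightarrow>
    (\<forall>\<epsilon>>0. \<forall>x\<in>D. \<forall>z\<in>D. norm z \<ge> norm x \<or>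
       z \<in> rat_closed_hull
              {y \<in> ((\<lambda>u. norm x *\<^sub>R u) ` ball 0 1) \<inter> D. norm (x - y) > 2 * norm x - \<epsilon>})"
  using dir1[OF assms] dir2[OF assms] by blast

end
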